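(* For all $\alpha,\beta\ge1$, \[ \Phi(\alpha,\beta)=\max\bigl\{R(AB):\ A,B \text{ are } 2\times 2 \text{ matrices with strictly positive entries},\ R(A)\le\alpha,\ R(B)\le\beta\bigr\}, \] and in particular the maximum is attained.
   Context: For a $2\times2$ matrix $A=(a_{ij})$ with strictly positive entries, $F(A)=\frac{a_{11}a_{22}}{a_{12}a_{21}}$ and the distortion is $R(A)=\max\{F(A),1/F(A)\}$. The envelope function is $\Phi(\alpha,\beta)=\left(\frac{1+\sqrt{\alpha\beta}}{\sqrt{\alpha}+\sqrt{\beta}}\right)^2$. *)

theory Defs
  imports "HOL-Analysis.Analysis"
begin

text \<open>2x2 real matrices are represented as real^2^2, rows/columns indexed by 1 and 2
  (so A $ 1 $ 2 is the entry a_12); matrix product is (**).\<close>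

definition pos_mat :: "real^2^2 \<Rightarrow> bool" where
  "pos_mat A \<longleftrightarrow> (\<forall>i j. A $ i $ j > 0)"

definition Fcr :: "real^2^2 \<Rightarrow> real" where
  "Fcr A = (A $ 1 $ 1 * A $ 2 $ 2) / (A $ 1 $ 2 * A $ 2 $ 1)"

definition Rdist :: "real^2^2 \<Rightarrow> real" where
  "Rdist A = max (Fcr A) (1 / Fcr A)"

definition Phi :: "real \<Rightarrow> real \<Rightarrow> real" where
  "Phi \<alpha> \<beta> = ((1 + sqrt (\<alpha> * \<beta>)) / (sqrt \<alpha> + sqrt \<beta>))^2"

end

theory Submission
  imports Defs
begin

definition G :: "real \<Rightarrow> real \<Rightarrow> real \<Rightarrow> real" where
  "G t a b = (t+1)*(t+a*b)/((t+a)*(t+b))"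

lemma core1:
  fixes t u v p q :: real
  assumes "t > 0" "u \<ge> 1" "v \<ge> 1" "u \<le> p" "v \<le> q"
  shows "G t (u^2) (v^2) \<le> ((1+p*q)/(p+q))^2"
proof -
  have id: "(1+u* v)^2*(t+u^2)*(t+v^2) - (t+1)*(t+u^2* v^2)*(u+v)^2 = (u^2-1)*(v^2-1)*(t-u* v)^2"
    by (simp add: algebra_simps power2_eq_square)
  have nn: "(u^2-1)*(v^2-1)*(t-u* v)^2 \<ge> 0"
    using assms by (intro mult_nonneg_nonneg) (auto simp: one_le_power)
  have pos: "(t+u^2)*(t+v^2) > 0" "(u+v)^2 > 0" using assms by (auto intro!: mult_pos_pos add_pos_nonneg)
  have "G t (u^2) (v^2) = (t+1)*(t+u^2* v^2)/((t+u^2)*(t+v^2))"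
    by (simp add: G_def power_mult_distrib)
  also have "\<dots> \<le> ((1+u* v)/(u+v))^2"
    using id nn pos by (simp add: power_divide divide_simps; simp add: algebra_simps)
  also have "\<dots> \<le> ((1+p*q)/(p+q))^2"
  proof (rule power_mono)
    have "(1+u* v)/(u+v) \<le> (1+p* v)/(p+v)"
    proof -
      have "(1+u* v)*(p+v) - (1+p* v)*(u+v) = (p-u)*(1-v^2)" by (simp add: algebra_simps power2_eq_square)
      moreover have "(p-u)*(1-v^2) \<le> 0" using assms
        by (intro mult_nonneg_nonpos) (auto simp: one_le_power)
      ultimately show ?thesis using assms by (simp add: divide_simps)
    qed
    also have "\<dots> \<le> (1+p*q)/(p+q)"
    proof -
      have "(1+p* v)*(p+q) - (1+p*q)*(p+v) = (q-v)*(1-p^2)" by (simp add: algebra_simps power2_eq_square)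
      moreover have "(q-v)*(1-p^2) \<le> 0" using assms
        by (intro mult_nonneg_nonpos) (auto simp: one_le_power)
      ultimately show ?thesis using assms by (simp add: divide_simps)
    qed
    finally show "(1+u* v)/(u+v) \<le> (1+p*q)/(p+q)" .
    show "0 \<le> (1+u* v)/(u+v)" using assms by simp
  qed
  finally show ?thesis .
qed

lemma Phi_ge1:
  fixes p q :: real
  assumes "p \<ge> 1" "q \<ge> 1"
  shows "1 \<le> ((1+p*q)/(p+q))^2"
proof -
  have "(1+p*q) - (p+q) = (p-1)*(q-1)" by (simp add: algebra_simps)
  moreover have "(p-1)*(q-1) \<ge> 0" using assms by simp
  ultimately have "p+q \<le> 1+p*q" by linarith
  hence "1 \<le> (1+p*q)/(p+q)" using assms by (simp add: divide_simps)
  thus ?thesis by (simp add: one_le_power)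
qed

lemma core:
  fixes t u v p q :: real
  assumes "t > 0" "u > 0" "v > 0" "p \<ge> 1" "q \<ge> 1"
    "1/p \<le> u" "u \<le> p" "1/q \<le> v" "v \<le> q"
  shows "G t (u^2) (v^2) \<le> ((1+p*q)/(p+q))^2"
proof (cases "u \<ge> 1 \<and> v \<ge> 1")
  case True thus ?thesis using core1 assms by blast
next
  case F1: False
  show ?thesis
  proof (cases "u \<le> 1 \<and> v \<le> 1")
    case True
    have "G t (u^2) (v^2) = G (t/(u^2* v^2)) ((1/u)^2) ((1/v)^2)"
      using assms by (simp add: G_def divide_simps; simp add: algebra_simps)
    also have "\<dots> \<le> ((1+p*q)/(p+q))^2"
    proof (rule core1)
      show "0 < t/(u^2* v^2)" using assms by simp
      show "1 \<le> 1/u" "1 \<le> 1/v" using True assms by auto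
      show "1/u \<le> p" using assms by (simp add: divide_simps mult.commute)
      show "1/v \<le> q" using assms by (simp add: divide_simps mult.commute)
    qed
    finally show ?thesis .
  next
    case False
    have neg: "(u^2-1)*(v^2-1) \<le> 0"
    proof (cases "u \<ge> 1")
      case True
      hence "v < 1" using F1 by auto
      hence "v^2 \<le> 1" using assms by (simp add: power_le_one)
      thus ?thesis using True by (intro mult_nonneg_nonpos) (auto simp: one_le_power)
    next
      case c: False
      hence "v > 1" using False by auto
      have "u^2 \<le> 1" using c assms by (simp add: power_le_one)
      thus ?thesis using \<open>v>1\<close> by (intro mult_nonpos_nonneg) (auto simp: one_le_power)
    qed
    have nz: "t + u^2 \<noteq> 0" "t + v^2 \<noteq> 0" using assms
      by (metis add_pos_nonneg less_irrefl zero_le_power2)+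
    have "G t (u^2) (v^2) - 1 = t*((u^2-1)*(v^2-1))/((t+u^2)*(t+v^2))"
      using assms nz by (simp add: G_def divide_simps; simp add: algebra_simps)
    also have "\<dots> \<le> 0"
    proof (rule divide_nonpos_nonneg)
      show "t*((u^2-1)*(v^2-1)) \<le> 0" using assms neg by (simp add: mult_nonneg_nonpos)
      show "0 \<le> (t+u^2)*(t+v^2)" using assms by simp
    qed
    finally have "G t (u^2) (v^2) \<le> 1" by simp
    thus ?thesis using Phi_ge1 assms by fastforce
  qed
qed

lemma G_frac:
  fixes X Y P Q R S :: real
  assumes "X>0" "Y>0" "P>0" "Q>0" "R>0" "S>0"
  shows "G (X/Y) (P/Q) (R/S) = ((X+Y)*(X*Q*S+Y*P*R))/((X*Q+Y*P)*(X*S+Y*R))"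
proof -
  have e1: "X/Y+1 = (X+Y)/Y" "X/Y + P/Q*(R/S) = (X*Q*S+Y*P*R)/(Y*Q*S)"
     "X/Y+P/Q = (X*Q+Y*P)/(Y*Q)" "X/Y+R/S = (X*S+Y*R)/(Y*S)" using assms by (simp_all add: field_simps)
  have "G (X/Y) (P/Q) (R/S) = ((X+Y)/Y * ((X*Q*S+Y*P*R)/(Y*Q*S))) / ((X*Q+Y*P)/(Y*Q) * ((X*S+Y*R)/(Y*S)))"
    unfolding G_def e1 ..
  also have "\<dots> = ((X+Y)*(X*Q*S+Y*P*R))/((X*Q+Y*P)*(X*S+Y*R))"
    using assms by (simp add: divide_simps; simp add: algebra_simps)
  finally show ?thesis .
qed
lemma canc:
  fixes K a c d e :: real
  assumes "K > 0"
  shows "a*(K*c)/((K*d)*e) = (a*c)/(e*d)"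
proof -
  have "a*(K*c)/((K*d)*e) = (K*(a*c))/(K*(e*d))" by (simp add: ac_simps)
  also have "\<dots> = (a*c)/(e*d)" using assms by (rule_tac mult_divide_mult_cancel_left) simp
  finally show ?thesis .
qed

lemma G_entries:
  fixes x11 x12 x21 x22 y11 y12 y21 y22 :: real
  assumes "x11>0" "x12>0" "x21>0" "x22>0" "y11>0" "y12>0" "y21>0" "y22>0"
  shows "((x11*y11+x12*y21)*(x21*y12+x22*y22))/((x11*y12+x12*y22)*(x21*y11+x22*y21))
     = G (x11*y11/(x12*y21)) (x11*x22/(x12*x21)) (y11*y22/(y12*y21))"
proof -
  let ?K = "x11*x12*y11*y21"
  have K: "?K > 0" using assms by simp
  have "G (x11*y11/(x12*y21)) (x11*x22/(x12*x21)) (y11*y22/(y12*y21))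
    = ((x11*y11+x12*y21)*(?K*(x21*y12+x22*y22)))/((?K*(x21*y11+x22*y21))*(x11*y12+x12*y22))"
    using assms by (subst G_frac) (simp_all add: algebra_simps)
  also have "\<dots> = ((x11*y11+x12*y21)*(x21*y12+x22*y22))/((x11*y12+x12*y22)*(x21*y11+x22*y21))"
    by (rule canc[OF K])
  finally show ?thesis ..
qed
lemma Fcr_prod:
  assumes "pos_mat A" "pos_mat B"
  shows "Fcr (A ** B) = G (A$1$1*B$1$1/(A$1$2*B$2$1)) (Fcr A) (Fcr B)"
proof -
  have p: "\<And>i j. A$i$j > 0" "\<And>i j. B$i$j > 0" using assms by (auto simp: pos_mat_def)
  have "Fcr (A ** B) = ((A$1$1*B$1$1+A$1$2*B$2$1)*(A$2$1*B$1$2+A$2$2*B$2$2))/((A$1$1*B$1$2+A$1$2*B$2$2)*(A$2$1*B$1$1+A$2$2*B$2$1))"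
    by (simp add: Fcr_def matrix_matrix_mult_def sum_2)
  also have "\<dots> = G (A$1$1*B$1$1/(A$1$2*B$2$1)) (Fcr A) (Fcr B)"
    unfolding Fcr_def by (rule G_entries) (simp_all add: p)
  finally show ?thesis .
qed

lemma G_inv:
  assumes "t > 0" "a > 0" "b > 0"
  shows "1 / G t a b = G (t/a) (1/a) b"
  using assms by (simp add: G_def divide_simps; simp add: algebra_simps)

lemma Rdist_bounds:
  assumes "pos_mat A" "Rdist A \<le> \<alpha>"
  shows "Fcr A > 0" "1/sqrt \<alpha> \<le> sqrt (Fcr A)" "sqrt (Fcr A) \<le> sqrt \<alpha>"
    "1/sqrt \<alpha> \<le> sqrt (1/Fcr A)" "sqrt (1/Fcr A) \<le> sqrt \<alpha>"
proof -
  have p: "\<And>i j. A$i$j > 0" using assms by (auto simp: pos_mat_def)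
  show f: "Fcr A > 0" unfolding Fcr_def using p by simp
  have a1: "Fcr A \<le> \<alpha>" "1/Fcr A \<le> \<alpha>" using assms(2) by (auto simp: Rdist_def)
  have "\<alpha> > 0" using a1 f by linarith
  have a2: "1/\<alpha> \<le> Fcr A" using a1 f \<open>\<alpha>>0\<close> by (simp add: divide_simps mult.commute)
  have a3: "1/\<alpha> \<le> 1/Fcr A" using a1 f \<open>\<alpha>>0\<close> by (simp add: divide_simps mult.commute)
  show "sqrt (Fcr A) \<le> sqrt \<alpha>" "sqrt (1/Fcr A) \<le> sqrt \<alpha>" using a1 by auto
  show "1/sqrt \<alpha> \<le> sqrt (Fcr A)" using a2 by (metis real_sqrt_divide real_sqrt_le_iff real_sqrt_one)
  show "1/sqrt \<alpha> \<le> sqrt (1/Fcr A)" using a3 by (metis real_sqrt_divide real_sqrt_le_iff real_sqrt_one)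
qed

lemma Gpq:
  fixes p q :: real
  assumes "p > 0" "q > 0"
  shows "G (p*q) (p^2) (q^2) = ((1+p*q)/(p+q))^2"
proof -
  have "G (p*q) (p^2) (q^2) = ((p*q)*(1+p*q)^2)/((p*q)*(p+q)^2)"
    unfolding G_def by (simp add: algebra_simps power2_eq_square)
  also have "\<dots> = ((1+p*q)/(p+q))^2" using assms by (simp add: power_divide)
  finally show ?thesis .
qed

lemma Phi_alt:
  assumes "\<alpha> \<ge> 0" "\<beta> \<ge> 0"
  shows "Phi \<alpha> \<beta> = ((1 + sqrt \<alpha> * sqrt \<beta>)/(sqrt \<alpha> + sqrt \<beta>))^2"
  by (simp add: Phi_def real_sqrt_mult)

theorem mainTheorem4:
  fixes \<alpha> \<beta> :: real
  assumes "\<alpha> \<ge> 1" and "\<beta> \<ge> 1"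
  shows "(\<forall>A B :: real^2^2. pos_mat A \<and> pos_mat B \<and> Rdist A \<le> \<alpha> \<and> Rdist B \<le> \<beta>
             \<longrightarrow> Rdist (A ** B) \<le> Phi \<alpha> \<beta>)
         \<and> (\<exists>A B :: real^2^2. pos_mat A \<and> pos_mat B \<and> Rdist A \<le> \<alpha> \<and> Rdist B \<le> \<beta>
             \<and> Rdist (A ** B) = Phi \<alpha> \<beta>)"
proof
  let ?p = "sqrt \<alpha>" and ?q = "sqrt \<beta>"
  have pq: "?p \<ge> 1" "?q \<ge> 1" using assms by auto
  have PH: "Phi \<alpha> \<beta> = ((1 + ?p * ?q)/(?p + ?q))^2" using assms Phi_alt by simp
  show "\<forall>A B :: real^2^2. pos_mat A \<and> pos_mat B \<and> Rdist A \<le> \<alpha> \<and> Rdist B \<le> \<beta>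
             \<longrightarrow> Rdist (A ** B) \<le> Phi \<alpha> \<beta>"
  proof (intro allI impI)
    fix A B :: "real^2^2"
    assume h: "pos_mat A \<and> pos_mat B \<and> Rdist A \<le> \<alpha> \<and> Rdist B \<le> \<beta>"
    have p: "\<And>i j. A$i$j > 0" "\<And>i j. B$i$j > 0" using h by (auto simp: pos_mat_def)
    define t where "t = A$1$1*B$1$1/(A$1$2*B$2$1)"
    have t: "t > 0" unfolding t_def using p by simp
    note ra = Rdist_bounds[of A \<alpha>] and rb = Rdist_bounds[of B \<beta>]
    define a where "a = Fcr A"
    define b where "b = Fcr B"
    have ab: "a > 0" "b > 0" using ra rb h a_def b_def by auto
    have F: "Fcr (A ** B) = G t a b" using Fcr_prod h t_def a_def b_def by simp
    have sa: "sqrt a ^ 2 = a" "sqrt b ^2 = b" "sqrt (1/a) ^2 = 1/a" using ab by auto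
    have ra': "1/?p \<le> sqrt a" "sqrt a \<le> ?p" "1/?p \<le> sqrt (1/a)" "sqrt (1/a) \<le> ?p"
      using ra h unfolding a_def by blast+
    have rb': "1/?q \<le> sqrt b" "sqrt b \<le> ?q"
      using rb h unfolding b_def by blast+
    have c1: "G t (sqrt a ^ 2) (sqrt b ^ 2) \<le> ((1+?p*?q)/(?p+?q))^2"
      by (rule core) (use t ab pq ra' rb' in auto)
    have c2: "G (t/a) (sqrt (1/a) ^ 2) (sqrt b ^ 2) \<le> ((1+?p*?q)/(?p+?q))^2"
      by (rule core) (use t ab pq ra' rb' in auto)
    have "G t a b \<le> Phi \<alpha> \<beta>" using c1 unfolding sa PH .
    moreover have "1 / G t a b \<le> Phi \<alpha> \<beta>" using c2 unfolding sa PH G_inv[OF t ab] .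
    ultimately show "Rdist (A ** B) \<le> Phi \<alpha> \<beta>" unfolding Rdist_def F by simp
  qed
  show "\<exists>A B :: real^2^2. pos_mat A \<and> pos_mat B \<and> Rdist A \<le> \<alpha> \<and> Rdist B \<le> \<beta>
             \<and> Rdist (A ** B) = Phi \<alpha> \<beta>"
  proof (intro exI conjI)
    define T where "T = ?p * ?q"
    have T: "T \<ge> 1" unfolding T_def using pq mult_mono[of 1 "?p" 1 "?q"] by simp
    let ?A = "vector [vector [T, 1], vector [T, \<alpha>]] :: real^2^2"
    let ?B = "vector [vector [1, 1], vector [1, \<beta>]] :: real^2^2"
    have ent: "?A$1$1 = T" "?A$1$2 = 1" "?A$2$1 = T" "?A$2$2 = \<alpha>"
              "?B$1$1 = 1" "?B$1$2 = 1" "?B$2$1 = 1" "?B$2$2 = \<beta>" by (simp_all add: vector_2)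
    show "pos_mat ?A" unfolding pos_mat_def forall_2 ent using T assms by simp
    show "pos_mat ?B" unfolding pos_mat_def forall_2 ent using T assms by simp
    have FA: "Fcr ?A = \<alpha>" unfolding Fcr_def ent using T by simp
    have FB: "Fcr ?B = \<beta>" unfolding Fcr_def ent by simp
    have "1/\<alpha> \<le> 1" using assms by simp
    then show "Rdist ?A \<le> \<alpha>" unfolding Rdist_def FA using assms by (intro max.boundedI) linarith+
    have "1/\<beta> \<le> 1" using assms by simp
    then show "Rdist ?B \<le> \<beta>" unfolding Rdist_def FB using assms by (intro max.boundedI) linarith+
    have pe: "(?A ** ?B)$1$1 = T+1" "(?A ** ?B)$1$2 = T+\<beta>" "(?A ** ?B)$2$1 = T+\<alpha>" "(?A ** ?B)$2$2 = T+\<alpha>*\<beta>"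
      by (simp_all add: matrix_matrix_mult_def sum_2 ent)
    have "Fcr (?A ** ?B) = G T \<alpha> \<beta>"
      unfolding Fcr_def G_def pe by (simp add: ac_simps)
    also have "\<dots> = Phi \<alpha> \<beta>"
    proof -
      have a: "\<alpha> = ?p^2" "\<beta> = ?q^2" using assms by auto
      show ?thesis unfolding PH T_def by (subst a(1), subst a(2), rule Gpq) (use pq in auto)
    qed
    finally have E: "Fcr (?A ** ?B) = Phi \<alpha> \<beta>" .
    have "Phi \<alpha> \<beta> \<ge> 1" using PH Phi_ge1 pq by simp
    moreover from this have "1 / Phi \<alpha> \<beta> \<le> 1" by simp
    ultimately show "Rdist (?A ** ?B) = Phi \<alpha> \<beta>" unfolding Rdist_def E
      by (intro max_absorb1) linarith
  qed
qed

end
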